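(* Let $p$ be a prime, $0<\alpha\le1$, $k$ a positive integer, and let $S\subseteq\mathbb{Z}_p$ be such that all $k$-wise sums of different elements of $S$ are distinct, excluding permutations of the summands (i.e., for any two $k$-element subsets $T,T'\subseteq S$, $\sum_{t\in T}t=\sum_{t\in T'}t$ in $\mathbb{Z}_p$ implies $T=T'$). Then $$\mathcal{C}^{\mathrm{bsgs1}}_\alpha(S)>\left(\alpha|S|/(2k)\right)^{k/(k+1)}.$$
   Context: The BSGS-1 $\alpha$-complexity $\mathcal{C}^{\mathrm{bsgs1}}_\alpha(S)$ of $S\subseteq\mathbb{Z}_p$ is the smallest integer $n$ such that there exist $X,Y\subseteq\mathbb{Z}_p$ with $|X|=|Y|=n$ and $|S\cap(X-Y)|\geq\alpha|S|$, where $X-Y=\{x-y\mid x\in X,y\in Y\}$ (computed in $\mathbb{Z}_p$). *)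

theory Defs
  imports Complex_Main "HOL-Computational_Algebra.Primes"
begin

text \<open>Z_p is represented by the integers {0..<p}; arithmetic is taken mod p.\<close>

definition zp :: "int \<Rightarrow> int set" where
  "zp p = {0..<p}"

definition diffset_mod :: "int \<Rightarrow> int set \<Rightarrow> int set \<Rightarrow> int set" where
  "diffset_mod p X Y = {(x - y) mod p | x y. x \<in> X \<and> y \<in> Y}"

definition bsgs1_complexity :: "int \<Rightarrow> real \<Rightarrow> int set \<Rightarrow> nat" where
  "bsgs1_complexity p \<alpha> S =
     (LEAST n. \<exists>X Y. X \<subseteq> zp p \<and> Y \<subseteq> zp p \<and> card X = n \<and> card Y = n \<and>
        real (card (S \<inter> diffset_mod p X Y)) \<ge> \<alpha> * real (card S))"

definition distinct_k_sums :: "int \<Rightarrow> nat \<Rightarrow> int set \<Rightarrow> bool" where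
  "distinct_k_sums p k S \<longleftrightarrow>
     (\<forall>T T'. T \<subseteq> S \<and> T' \<subseteq> S \<and> card T = k \<and> card T' = k \<and>
        (\<Sum>T) mod p = (\<Sum>T') mod p \<longrightarrow> T = T')"

end

theory Submission
  imports Defs
begin


locale bg =
  fixes adj :: "'v \<Rightarrow> 'v \<Rightarrow> bool" and sd :: "'v \<Rightarrow> bool"
    and ed :: "'v \<Rightarrow> 'v \<Rightarrow> 'e" and val :: "'e \<Rightarrow> int" and phi :: "'v \<Rightarrow> int"
    and k :: nat and c :: real and v0 :: 'v
  assumes sym: "adj u w \<Longrightarrow> adj w u"
  and side: "adj u w \<Longrightarrow> sd u \<noteq> sd w"
  and ed_inj: "adj u w \<Longrightarrow> adj u' w' \<Longrightarrow> ed u w = ed u' w' \<Longrightarrow> (u = u' \<and> w = w') \<or> (u = w' \<and> w = u')"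
  and tele: "adj u w \<Longrightarrow> (if sd u then val (ed u w) else - val (ed u w)) = phi u - phi w"
  and finN: "finite {w. adj u w}"
  and deg: "adj u w \<Longrightarrow> real (card {w. adj u w}) \<ge> c"
  and v0: "\<exists>w. adj v0 w"
  and nosum: "\<And>A B. finite A \<Longrightarrow> finite B \<Longrightarrow> A \<subseteq> {ed u w | u w. adj u w} \<Longrightarrow> B \<subseteq> {ed u w | u w. adj u w} \<Longrightarrow>
      A \<inter> B = {} \<Longrightarrow> A \<noteq> {} \<Longrightarrow> card A = card B \<Longrightarrow> card A \<le> k \<Longrightarrow> sum val A \<noteq> sum val B"
begin

definition N :: "'v \<Rightarrow> 'v set" where "N u = {w. adj u w}"

fun R :: "nat \<Rightarrow> 'v set" where
  "R 0 = {v0}"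
| "R (Suc i) = R i \<union> {w. \<exists>u\<in>R i. adj u w}"

fun D :: "nat \<Rightarrow> 'v set" where
  "D 0 = {v0}"
| "D (Suc i) = R (Suc i) - R i"

lemma R_mono: "i \<le> j \<Longrightarrow> R i \<subseteq> R j"
  by (induction j) (auto simp: le_Suc_eq)

lemma D_sub: "D i \<subseteq> R i"
  by (cases i) auto

lemma R_D: "R i = (\<Union>t\<le>i. D t)"
proof (induction i)
  case 0 then show ?case by simp
next
  case (Suc i)
  have "R (Suc i) = R i \<union> D (Suc i)" using R_mono[of i "Suc i"] by auto
  then show ?case using Suc by (auto simp: atMost_Suc)
qed

lemma D_disj: "t < i \<Longrightarrow> x \<in> D t \<Longrightarrow> x \<in> D i \<Longrightarrow> False"
proof -
  assume "t < i" "x \<in> D t" "x \<in> D i"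
  then obtain i' where i': "i = Suc i'" "t \<le> i'" by (cases i) auto
  have "x \<in> R i'" using D_sub[of t] R_mono[OF i'(2)] \<open>x \<in> D t\<close> by auto
  then show False using \<open>x \<in> D i\<close> i' by auto
qed

lemma D_eq: "x \<in> D t \<Longrightarrow> x \<in> D i \<Longrightarrow> t = i"
  using D_disj by (metis linorder_neqE_nat)

lemma finR: "finite (R i)"
proof (induction i)
  case (Suc i)
  have "{w. \<exists>u\<in>R i. adj u w} = (\<Union>u\<in>R i. {w. adj u w})" by auto
  then show ?case using Suc finN by auto
qed simp

lemma finD: "finite (D i)"
  using finR D_sub finite_subset by blast

lemma D_pred: "u \<in> D (Suc i) \<Longrightarrow> \<exists>u'\<in>D i. adj u' u"
proof -
  assume u: "u \<in> D (Suc i)"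
  then obtain u' where u': "u' \<in> R i" "adj u' u" "u \<notin> R i" by auto
  have "u' \<in> D i"
  proof (cases i)
    case (Suc i')
    have "u' \<notin> R i'" using u' Suc by auto
    then show ?thesis using u' Suc by auto
  qed (use u' in auto)
  then show ?thesis using u' by auto
qed

lemma D_side: "u \<in> D i \<Longrightarrow> sd u = (even i = sd v0)"
proof (induction i arbitrary: u)
  case 0 then show ?case by simp
next
  case (Suc i)
  then obtain u' where "u' \<in> D i" "adj u' u" using D_pred by blast
  then show ?case using Suc.IH side by fastforce
qed

lemma D_nbr: "u \<in> D i \<Longrightarrow> adj u w \<Longrightarrow> w \<notin> D (Suc i) \<Longrightarrow> i \<ge> 1 \<and> w \<in> D (i - 1)"
proof -
  assume u: "u \<in> D i" and a: "adj u w" and w: "w \<notin> D (Suc i)"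
  have "w \<in> R (Suc i)" using u D_sub[of i] a by auto
  then have "w \<in> R i" using w by auto
  then obtain t where t: "t \<le> i" "w \<in> D t" using R_D by auto
  have "t \<noteq> i" using D_side[OF u] D_side[OF t(2)] side[OF a] by auto
  moreover have "\<not> Suc t < i"
  proof
    assume "Suc t < i"
    have "u \<in> R (Suc t)" using t(2) D_sub[of t] sym[OF a] by auto
    then have "u \<in> (\<Union>s\<le>Suc t. D s)" using R_D by auto
    then obtain s where "s \<le> Suc t" "u \<in> D s" by auto
    then show False using D_eq[OF u] \<open>Suc t < i\<close> by auto
  qed
  ultimately have "t = i - 1" "i \<ge> 1" using t by auto
  then show ?thesis using t by auto
qed

definition lp :: "nat \<Rightarrow> (nat \<Rightarrow> 'v) \<Rightarrow> bool" where
  "lp j f \<longleftrightarrow> f 0 = v0 \<and> (\<forall>t\<le>j. f t \<in> D t) \<and> (\<forall>t\<in>{1..j}. adj (f (t - 1)) (f t))"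

lemma lp_exists: "w \<in> D j \<Longrightarrow> \<exists>f. lp j f \<and> f j = w"
proof (induction j arbitrary: w)
  case 0
  then have "w = v0" by simp
  have "lp 0 (\<lambda>_. v0)" by (auto simp: lp_def)
  then show ?case using \<open>w = v0\<close> by blast
next
  case (Suc j)
  obtain u where u: "u \<in> D j" "adj u w" using D_pred Suc.prems by blast
  obtain f where f: "lp j f" "f j = u" using Suc.IH[OF u(1)] by blast
  let ?g = "f(Suc j := w)"
  have "lp (Suc j) ?g" using f u Suc.prems unfolding lp_def
    by (auto simp: le_Suc_eq)
  then show ?case by auto
qed

definition eP :: "(nat \<Rightarrow> 'v) \<Rightarrow> nat \<Rightarrow> 'e" where
  "eP f t = ed (f (t - 1)) (f t)"

lemma pos: "lp j f \<Longrightarrow> lp j' g \<Longrightarrow> t \<in> {1..j} \<Longrightarrow> t' \<in> {1..j'} \<Longrightarrow> eP f t = eP g t'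
   \<Longrightarrow> t = t' \<and> f (t - 1) = g (t - 1) \<and> f t = g t"
proof -
  assume f: "lp j f" and g: "lp j' g" and t: "t \<in> {1..j}" and t': "t' \<in> {1..j'}" and e: "eP f t = eP g t'"
  have a1: "adj (f (t - 1)) (f t)" using f t unfolding lp_def by auto
  have a2: "adj (g (t' - 1)) (g t')" using g t' unfolding lp_def by auto
  have l1: "f (t - 1) \<in> D (t - 1)" "f t \<in> D t" using f t unfolding lp_def by auto
  have l2: "g (t' - 1) \<in> D (t' - 1)" "g t' \<in> D t'" using g t' unfolding lp_def by auto
  from ed_inj[OF a1 a2] e[unfolded eP_def]
  have "(f (t - 1) = g (t' - 1) \<and> f t = g t') \<or> (f (t - 1) = g t' \<and> f t = g (t' - 1))" by auto
  then show ?thesis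
  proof
    assume h: "f (t - 1) = g (t' - 1) \<and> f t = g t'"
    then have "t = t'" using D_eq l1 l2 by metis
    then show ?thesis using h by auto
  next
    assume h: "f (t - 1) = g t' \<and> f t = g (t' - 1)"
    then have "t - 1 = t'" "t = t' - 1" using D_eq l1 l2 by metis+
    then show ?thesis using t t' by auto
  qed
qed

lemma telescope: "(\<forall>t\<in>{1..j}. adj (f (t - 1)) (f t)) \<Longrightarrow>
  (\<Sum>t\<in>{1..j}. if sd (f (t - 1)) then val (eP f t) else - val (eP f t)) = phi (f 0) - phi (f j)"
proof (induction j)
  case 0 then show ?case by simp
next
  case (Suc j)
  have a: "adj (f j) (f (Suc j))" using Suc.prems by (metis atLeastAtMost_iff diff_Suc_1 le_add1 le_refl plus_1_eq_Suc)
  have "(\<Sum>t\<in>{1..Suc j}. if sd (f (t - 1)) then val (eP f t) else - val (eP f t))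
     = (\<Sum>t\<in>{1..j}. if sd (f (t - 1)) then val (eP f t) else - val (eP f t))
       + (if sd (f j) then val (eP f (Suc j)) else - val (eP f (Suc j)))" by simp
  also have "\<dots> = phi (f 0) - phi (f j) + (phi (f j) - phi (f (Suc j)))"
    using Suc tele[OF a] by (auto simp: eP_def split: if_splits)
  finally show ?case by simp
qed

lemma lp_ext: "lp i f \<Longrightarrow> f i = u \<Longrightarrow> w \<in> D (Suc i) \<Longrightarrow> adj u w \<Longrightarrow> lp (Suc i) (f(Suc i := w))"
  unfolding lp_def by (auto simp: le_Suc_eq)

lemma D_same_side: "u \<in> D i \<Longrightarrow> u' \<in> D i \<Longrightarrow> sd u = sd u'"
  using D_side by metis

lemma lp_inj: "lp j F \<Longrightarrow> inj_on (eP F) {1..j}"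
  unfolding inj_on_def using pos by blast

lemma two_parent:
  assumes ik: "Suc i \<le> k" and w: "w \<in> D (Suc i)" and u: "u \<in> D i" and u': "u' \<in> D i"
    and a: "adj u w" and a': "adj u' w"
  shows "u = u'"
proof (rule ccontr)
  assume ne: "u \<noteq> u'"
  define j where "j = Suc i"
  obtain f where f: "lp i f" "f i = u" using lp_exists[OF u] by blast
  obtain g where g: "lp i g" "g i = u'" using lp_exists[OF u'] by blast
  define F where "F = f(Suc i := w)"
  define G where "G = g(Suc i := w)"
  have F: "lp j F" using lp_ext[OF f w a] unfolding F_def j_def .
  have G: "lp j G" using lp_ext[OF g w a'] unfolding G_def j_def .
  have Fj: "F j = w" "F (j - 1) = u" using f unfolding F_def j_def by auto
  have Gj: "G j = w" "G (j - 1) = u'" using g unfolding G_def j_def by auto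
  define P where "P = {1..j} \<inter> {t. sd (F (t - 1))}"
  define Q where "Q = {1..j} \<inter> - {t. sd (F (t - 1))}"
  have sdG: "sd (G (t - 1)) = sd (F (t - 1))" if "t \<in> {1..j}" for t
  proof -
    have "t - 1 \<le> j" using that by auto
    then have "F (t - 1) \<in> D (t - 1)" "G (t - 1) \<in> D (t - 1)" using F G unfolding lp_def by blast+
    then show ?thesis using D_same_side by metis
  qed
  have adjF: "\<forall>t\<in>{1..j}. adj (F (t - 1)) (F t)" using F unfolding lp_def by auto
  have adjG: "\<forall>t\<in>{1..j}. adj (G (t - 1)) (G t)" using G unfolding lp_def by auto
  have F0: "F 0 = v0" and G0: "G 0 = v0" using F G unfolding lp_def by auto
  have tF: "(\<Sum>t\<in>{1..j}. if sd (F (t - 1)) then val (eP F t) else - val (eP F t)) = phi v0 - phi w"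
    using telescope[OF adjF] F0 Fj by simp
  have tG0: "(\<Sum>t\<in>{1..j}. if sd (G (t - 1)) then val (eP G t) else - val (eP G t)) = phi v0 - phi w"
    using telescope[OF adjG] G0 Gj by simp
  have tG: "(\<Sum>t\<in>{1..j}. if sd (F (t - 1)) then val (eP G t) else - val (eP G t)) = phi v0 - phi w"
    unfolding tG0[symmetric]
  proof (rule sum.cong[OF refl])
    fix t assume "t \<in> {1..j}"
    then show "(if sd (F (t - 1)) then val (eP G t) else - val (eP G t)) = (if sd (G (t - 1)) then val (eP G t) else - val (eP G t))"
      using sdG by simp
  qed
  have sF: "sum (\<lambda>t. val (eP F t)) P - sum (\<lambda>t. val (eP F t)) Q = phi v0 - phi w"
    using tF unfolding P_def Q_def by (simp add: sum.If_cases sum_negf)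
  have sG: "sum (\<lambda>t. val (eP G t)) P - sum (\<lambda>t. val (eP G t)) Q = phi v0 - phi w"
    using tG unfolding P_def Q_def by (simp add: sum.If_cases sum_negf)
  have PQ: "P \<inter> Q = {}" "P \<union> Q = {1..j}" "P \<subseteq> {1..j}" "Q \<subseteq> {1..j}" unfolding P_def Q_def by auto
  have finPQ: "finite P" "finite Q" using finite_subset[OF PQ(3)] finite_subset[OF PQ(4)] by auto
  have injF: "inj_on (eP F) {1..j}" using lp_inj[OF F] .
  have injG: "inj_on (eP G) {1..j}" using lp_inj[OF G] .
  have injFP: "inj_on (eP F) P" "inj_on (eP F) Q" using inj_on_subset[OF injF PQ(3)] inj_on_subset[OF injF PQ(4)] .
  have injGP: "inj_on (eP G) P" "inj_on (eP G) Q" using inj_on_subset[OF injG PQ(3)] inj_on_subset[OF injG PQ(4)] .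
  have crossFG: "t = t'" if "t \<in> {1..j}" "t' \<in> {1..j}" "eP F t = eP G t'" for t t'
    using pos[OF F G that] by blast
  have crossGF: "t = t'" if "t \<in> {1..j}" "t' \<in> {1..j}" "eP G t = eP F t'" for t t'
    using pos[OF G F that] by blast
  define A where "A = eP F ` P \<union> eP G ` Q"
  define B where "B = eP G ` P \<union> eP F ` Q"
  have dA: "eP F ` P \<inter> eP G ` Q = {}"
  proof (rule ccontr)
    assume "eP F ` P \<inter> eP G ` Q \<noteq> {}"
    then obtain t t' where tt: "t \<in> P" "t' \<in> Q" "eP F t = eP G t'" by auto
    then have "t \<in> {1..j}" "t' \<in> {1..j}" using PQ by auto
    then have "t = t'" using crossFG tt(3) by blast
    then show False using tt PQ(1) by auto
  qed
  have dB: "eP G ` P \<inter> eP F ` Q = {}"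
  proof (rule ccontr)
    assume "eP G ` P \<inter> eP F ` Q \<noteq> {}"
    then obtain t t' where tt: "t \<in> P" "t' \<in> Q" "eP G t = eP F t'" by auto
    then have "t \<in> {1..j}" "t' \<in> {1..j}" using PQ by auto
    then have "t = t'" using crossGF tt(3) by blast
    then show False using tt PQ(1) by auto
  qed
  have sumA: "sum val A = sum (\<lambda>t. val (eP F t)) P + sum (\<lambda>t. val (eP G t)) Q"
    unfolding A_def using finPQ
    by (simp add: sum.union_disjoint[OF _ _ dA] sum.reindex[OF injFP(1)] sum.reindex[OF injGP(2)])
  have sumB: "sum val B = sum (\<lambda>t. val (eP G t)) P + sum (\<lambda>t. val (eP F t)) Q"
    unfolding B_def using finPQ
    by (simp add: sum.union_disjoint[OF _ _ dB] sum.reindex[OF injGP(1)] sum.reindex[OF injFP(2)])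
  have sAB: "sum val A = sum val B" using sumA sumB sF sG by linarith
  have cA: "card A = card P + card Q"
    unfolding A_def using dA finPQ injFP injGP by (simp add: card_Un_disjoint card_image)
  have cB: "card B = card P + card Q"
    unfolding B_def using dB finPQ injFP injGP by (simp add: card_Un_disjoint card_image)
  have cPQ: "card P + card Q = j"
  proof -
    have "card (P \<union> Q) = card P + card Q" using card_Un_disjoint[OF finPQ PQ(1)] .
    then show ?thesis using PQ(2) by simp
  qed
  have finAB: "finite A" "finite B" unfolding A_def B_def using finPQ by auto
  have jin: "j \<in> {1..j}" unfolding j_def by auto
  have neFG: "eP F j \<noteq> eP G j"
  proof
    assume "eP F j = eP G j"
    then have "F (j - 1) = G (j - 1)" using pos[OF F G jin jin] by blast
    then show False using Fj Gj ne by simp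
  qed
  have "A \<noteq> B"
  proof (cases "j \<in> P")
    case True
    have "eP F j \<in> A" using True unfolding A_def by auto
    moreover have "eP F j \<notin> B"
    proof
      assume "eP F j \<in> B"
      then show False unfolding B_def
      proof
        assume "eP F j \<in> eP G ` P"
        then obtain t where t: "t \<in> P" "eP F j = eP G t" by auto
        have "t \<in> {1..j}" using t PQ(3) by auto
        then have "t = j" using crossFG[OF jin _ t(2)] by blast
        then show False using t neFG by simp
      next
        assume "eP F j \<in> eP F ` Q"
        then obtain t where t: "t \<in> Q" "eP F j = eP F t" by auto
        have "t \<in> {1..j}" using t PQ(4) by auto
        then have "t = j" using inj_onD[OF injF t(2) jin] by simp
        then show False using t True PQ(1) by blast
      qed
    qed
    ultimately show ?thesis by blast
  next
    case False
    then have jQ: "j \<in> Q" using PQ jin by blast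
    have "eP F j \<in> B" using jQ unfolding B_def by auto
    moreover have "eP F j \<notin> A"
    proof
      assume "eP F j \<in> A"
      then show False unfolding A_def
      proof
        assume "eP F j \<in> eP F ` P"
        then obtain t where t: "t \<in> P" "eP F j = eP F t" by auto
        have "t \<in> {1..j}" using t PQ(3) by auto
        then have "t = j" using inj_onD[OF injF t(2) jin] by simp
        then show False using t False by simp
      next
        assume "eP F j \<in> eP G ` Q"
        then obtain t where t: "t \<in> Q" "eP F j = eP G t" by auto
        have "t \<in> {1..j}" using t PQ(4) by auto
        then have "t = j" using crossFG[OF jin _ t(2)] by blast
        then show False using t neFG by simp
      qed
    qed
    ultimately show ?thesis by blast
  qed
  define A' where "A' = A - B"
  define B' where "B' = B - A"
  have cAB: "card A = card B" using cA cB by simp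
  have cA': "card A' = card A - card (A \<inter> B)" unfolding A'_def
    using card_Diff_subset_Int[of A B] finAB by simp
  have cB': "card B' = card B - card (A \<inter> B)" unfolding B'_def
    using card_Diff_subset_Int[of B A] finAB by (simp add: Int_commute)
  have A'ne: "A' \<noteq> {}"
  proof
    assume "A' = {}"
    then have "A \<subseteq> B" unfolding A'_def by auto
    then have "A = B" using cAB finAB by (simp add: card_subset_eq)
    then show False using \<open>A \<noteq> B\<close> by simp
  qed
  have sA': "sum val A = sum val A' + sum val (A \<inter> B)" unfolding A'_def
    using sum.Int_Diff[OF finAB(1), of val B] by simp
  have sB': "sum val B = sum val B' + sum val (A \<inter> B)" unfolding B'_def
    using sum.Int_Diff[OF finAB(2), of val A] by (simp add: Int_commute)
  have eF: "eP F t \<in> {ed u w | u w. adj u w}" if "t \<in> {1..j}" for t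
    using adjF that unfolding eP_def by blast
  have eG: "eP G t \<in> {ed u w | u w. adj u w}" if "t \<in> {1..j}" for t
    using adjG that unfolding eP_def by blast
  have EA: "A \<subseteq> {ed u w | u w. adj u w}" "B \<subseteq> {ed u w | u w. adj u w}"
    unfolding A_def B_def using eF eG PQ(3,4) by auto
  have "sum val A' \<noteq> sum val B'"
  proof (rule nosum)
    show "finite A'" "finite B'" unfolding A'_def B'_def using finAB by auto
    show "A' \<subseteq> {ed u w | u w. adj u w}" "B' \<subseteq> {ed u w | u w. adj u w}"
      unfolding A'_def B'_def using EA by auto
    show "A' \<inter> B' = {}" unfolding A'_def B'_def by auto
    show "A' \<noteq> {}" by fact
    show "card A' = card B'" using cA' cB' cAB by simp
    show "card A' \<le> k" using cA' cA cPQ ik unfolding j_def by simp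
  qed
  then show False using sA' sB' sAB by simp
qed

lemma D1: "D (Suc 0) = {w. adj v0 w}"
  using side by auto

lemma count_step:
  assumes c1: "1 \<le> c" and i1: "1 \<le> i" and ik: "Suc i \<le> k"
  shows "real (card (D (Suc i))) \<ge> (c - 1) * real (card (D i))"
proof -
  obtain i' where i': "i = Suc i'" using i1 by (cases i) auto
  define M where "M u = {w. adj u w} \<inter> D (Suc i)" for u
  have Mc: "real (card (M u)) \<ge> c - 1" if u: "u \<in> D i" for u
  proof -
    have sub: "{w. adj u w} \<subseteq> M u \<union> ({w. adj u w} \<inter> D i')"
      using D_nbr[OF u] i' unfolding M_def by auto
    have le1: "card ({w. adj u w} \<inter> D i') \<le> 1"
    proof -
      have "\<forall>a\<in>{w. adj u w} \<inter> D i'. \<forall>b\<in>{w. adj u w} \<inter> D i'. a = b"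
      proof (intro ballI)
        fix a b assume a: "a \<in> {w. adj u w} \<inter> D i'" and b: "b \<in> {w. adj u w} \<inter> D i'"
        have "Suc i' \<le> k" using ik i' by simp
        moreover have "u \<in> D (Suc i')" using u unfolding i' .
        ultimately show "a = b" using two_parent[of i' u a b] a b sym by auto
      qed
      moreover have "finite ({w. adj u w} \<inter> D i')" using finN by auto
      ultimately show ?thesis using card_le_Suc0_iff_eq by (metis One_nat_def)
    qed
    have finM: "finite (M u)" unfolding M_def using finN by auto
    have "card {w. adj u w} \<le> card (M u \<union> ({w. adj u w} \<inter> D i'))"
      using card_mono[OF _ sub] finM finN by auto
    also have "\<dots> \<le> card (M u) + card ({w. adj u w} \<inter> D i')" by (rule card_Un_le)
    finally have A1: "card {w. adj u w} \<le> card (M u) + 1" using le1 by simp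
    have uS: "u \<in> D (Suc i')" using u unfolding i' .
    obtain u' where "u' \<in> D i'" "adj u' u" using D_pred[OF uS] by blast
    then have "c \<le> real (card {w. adj u w})" using deg sym by blast
    then show ?thesis using A1 by linarith
  qed
  have disj: "M u \<inter> M u' = {}" if "u \<in> D i" "u' \<in> D i" "u \<noteq> u'" for u u'
  proof (rule ccontr)
    assume "M u \<inter> M u' \<noteq> {}"
    then obtain w where w: "w \<in> D (Suc i)" "adj u w" "adj u' w" unfolding M_def by auto
    then show False using two_parent[OF ik w(1) that(1,2) w(2,3)] that(3) by simp
  qed
  have finM: "finite (M u)" for u unfolding M_def using finN by auto
  have "card (\<Union>u\<in>D i. M u) = (\<Sum>u\<in>D i. card (M u))"
    by (rule card_UN_disjoint[OF finD]) (use finM disj in auto)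
  moreover have "(\<Union>u\<in>D i. M u) \<subseteq> D (Suc i)" unfolding M_def by auto
  ultimately have "(\<Sum>u\<in>D i. card (M u)) \<le> card (D (Suc i))"
    using card_mono[OF finD] by metis
  then have "(\<Sum>u\<in>D i. real (card (M u))) \<le> real (card (D (Suc i)))"
    by (metis of_nat_le_iff of_nat_sum)
  moreover have "(\<Sum>u\<in>D i. (c - 1)) \<le> (\<Sum>u\<in>D i. real (card (M u)))"
    using Mc by (intro sum_mono) auto
  ultimately show ?thesis by (simp add: mult.commute)
qed

lemma count:
  assumes c1: "1 \<le> c" shows "1 \<le> i \<Longrightarrow> i \<le> k \<Longrightarrow> real (card (D i)) \<ge> c * (c - 1) ^ (i - 1)"
proof (induction i)
  case 0 then show ?case by simp
next
  case (Suc i)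
  show ?case
  proof (cases "i = 0")
    case True
    obtain w where "adj v0 w" using v0 by blast
    then have "c \<le> real (card {w. adj v0 w})" using deg by blast
    then show ?thesis using True D1 by simp
  next
    case False
    then have IH: "c * (c - 1) ^ (i - 1) \<le> real (card (D i))" using Suc by simp
    have st: "(c - 1) * real (card (D i)) \<le> real (card (D (Suc i)))"
      using count_step[OF c1 _ Suc.prems(2)] False by simp
    have "c * (c - 1) ^ (Suc i - 1) = (c - 1) * (c * (c - 1) ^ (i - 1))"
      using False by (cases i) (auto simp: algebra_simps)
    also have "\<dots> \<le> (c - 1) * real (card (D i))" using IH c1 by (intro mult_left_mono) auto
    finally show ?thesis using st by simp
  qed
qed

lemma final:
  assumes c1: "1 \<le> c" and k1: "1 \<le> k"
    and finV: "\<And>b. finite {u. (\<exists>w. adj u w) \<and> sd u = b}"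
  shows "\<exists>b. c * (c - 1) ^ (k - 1) \<le> real (card {u. (\<exists>w. adj u w) \<and> sd u = b})"
proof -
  have "D k \<subseteq> {u. (\<exists>w. adj u w) \<and> sd u = (even k = sd v0)}"
  proof
    fix u assume u: "u \<in> D k"
    obtain k' where k': "k = Suc k'" using k1 by (cases k) auto
    have uS: "u \<in> D (Suc k')" using u unfolding k' .
    obtain u' where "adj u' u" using D_pred[OF uS] by blast
    then show "u \<in> {u. (\<exists>w. adj u w) \<and> sd u = (even k = sd v0)}" using sym D_side[OF u] by blast
  qed
  then have "card (D k) \<le> card {u. (\<exists>w. adj u w) \<and> sd u = (even k = sd v0)}"
    using card_mono finV by blast
  then show ?thesis using count[OF c1 k1 order.refl] by (meson of_nat_le_iff order_trans)
qed


end

lemma prune: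
  fixes E :: "('a \<times> 'b) set" and c :: real
  assumes "finite E" "E \<noteq> {}" "c > 0" "real (card E) \<ge> c * (real (card (fst ` E)) + real (card (snd ` E)))"
  shows "\<exists>E'\<subseteq>E. E' \<noteq> {} \<and> (\<forall>x y. (x, y) \<in> E' \<longrightarrow>
            real (card {y'. (x, y') \<in> E'}) \<ge> c \<and> real (card {x'. (x', y) \<in> E'}) \<ge> c)"
  using assms
proof (induction "card E" arbitrary: E rule: less_induct)
  case less
  note fin = less.prems(1)
  show ?case
  proof (cases "\<forall>x y. (x, y) \<in> E \<longrightarrow> real (card {y'. (x, y') \<in> E}) \<ge> c \<and> real (card {x'. (x', y) \<in> E}) \<ge> c")
    case True then show ?thesis using less.prems(2) by (intro exI[of _ E]) simp
  next
    case False
    then obtain x y where xy: "(x, y) \<in> E" and bad: "\<not> (real (card {y'. (x, y') \<in> E}) \<ge> c \<and> real (card {x'. (x', y) \<in> E}) \<ge> c)"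
      by blast
    have finF: "finite (fst ` E)" "finite (snd ` E)" using fin by auto
    show ?thesis
    proof (cases "real (card {y'. (x, y') \<in> E}) < c")
      case True
      define Ex where "Ex = {e \<in> E. fst e = x}"
      define E1 where "E1 = E - Ex"
      have Exc: "card Ex = card {y'. (x, y') \<in> E}"
      proof -
        have "Ex = (\<lambda>y'. (x, y')) ` {y'. (x, y') \<in> E}" unfolding Ex_def by force
        moreover have "inj_on (\<lambda>y'. (x, y')) {y'. (x, y') \<in> E}" by (auto simp: inj_on_def)
        ultimately show ?thesis by (simp add: card_image)
      qed
      have ExE: "Ex \<subseteq> E" unfolding Ex_def by auto
      have finEx: "finite Ex" using finite_subset[OF ExE fin] .
      have cE1: "card E1 = card E - card Ex" unfolding E1_def using card_Diff_subset[OF finEx ExE] .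
      have cEx: "card Ex \<le> card E" using card_mono[OF fin ExE] .
      have "(x, y) \<in> Ex" using xy unfolding Ex_def by simp
      then have Ex1: "card Ex \<ge> 1" using finEx by (metis One_nat_def Suc_leI card_gt_0_iff empty_iff)
      have f1: "fst ` E1 \<subseteq> fst ` E - {x}" unfolding E1_def Ex_def by auto
      have "card (fst ` E1) \<le> card (fst ` E - {x})" using card_mono[OF _ f1] finF by auto
      also have "\<dots> = card (fst ` E) - 1" using xy by (simp add: card_Diff_singleton_if finF rev_image_eqI)
      finally have cf0: "card (fst ` E1) \<le> card (fst ` E) - 1" .
      have "x \<in> fst ` E" using xy by force
      then have "card (fst ` E) \<ge> 1" using finF by (metis One_nat_def Suc_leI card_gt_0_iff empty_iff)
      then have cf: "card (fst ` E1) + 1 \<le> card (fst ` E)" using cf0 by linarith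
      have "snd ` E1 \<subseteq> snd ` E" unfolding E1_def by auto
      then have cs: "card (snd ` E1) \<le> card (snd ` E)" using card_mono finF by blast
      have r1: "real (card E1) = real (card E) - real (card Ex)" using cE1 cEx by simp
      have "real (card E1) > c * (real (card (fst ` E1)) + real (card (snd ` E1)))"
      proof -
        have "c * (real (card (fst ` E1)) + real (card (snd ` E1))) \<le> c * (real (card (fst ` E)) - 1 + real (card (snd ` E)))"
          using cf cs less.prems(3) by (intro mult_left_mono) auto
        also have "\<dots> = c * (real (card (fst ` E)) + real (card (snd ` E))) - c" by (simp add: algebra_simps)
        also have "\<dots> < real (card E) - real (card Ex)" using less.prems(4) True Exc by linarith
        finally show ?thesis using r1 by simp
      qed
      moreover have "c * (real (card (fst ` E1)) + real (card (snd ` E1))) \<ge> 0" using less.prems(3) by simp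
      ultimately have pos: "card E1 > 0" by linarith
      have finE1: "finite E1" unfolding E1_def using fin by auto
      have lt: "card E1 < card E" using cE1 Ex1 cEx pos by linarith
      have ne1: "E1 \<noteq> {}" using pos by auto
      have "\<exists>E'\<subseteq>E1. E' \<noteq> {} \<and> (\<forall>x y. (x, y) \<in> E' \<longrightarrow>
            real (card {y'. (x, y') \<in> E'}) \<ge> c \<and> real (card {x'. (x', y) \<in> E'}) \<ge> c)"
        by (rule less.hyps[OF lt finE1 ne1 less.prems(3)]) (use \<open>real (card E1) > _\<close> in linarith)
      then show ?thesis unfolding E1_def by blast
    next
      case False
      then have True': "real (card {x'. (x', y) \<in> E}) < c" using bad by linarith
      define Ex where "Ex = {e \<in> E. snd e = y}"
      define E1 where "E1 = E - Ex"
      have Exc: "card Ex = card {x'. (x', y) \<in> E}"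
      proof -
        have "Ex = (\<lambda>x'. (x', y)) ` {x'. (x', y) \<in> E}" unfolding Ex_def by force
        moreover have "inj_on (\<lambda>x'. (x', y)) {x'. (x', y) \<in> E}" by (auto simp: inj_on_def)
        ultimately show ?thesis by (simp add: card_image)
      qed
      have ExE: "Ex \<subseteq> E" unfolding Ex_def by auto
      have finEx: "finite Ex" using finite_subset[OF ExE fin] .
      have cE1: "card E1 = card E - card Ex" unfolding E1_def using card_Diff_subset[OF finEx ExE] .
      have cEx: "card Ex \<le> card E" using card_mono[OF fin ExE] .
      have "(x, y) \<in> Ex" using xy unfolding Ex_def by simp
      then have Ex1: "card Ex \<ge> 1" using finEx by (metis One_nat_def Suc_leI card_gt_0_iff empty_iff)
      have f1: "snd ` E1 \<subseteq> snd ` E - {y}" unfolding E1_def Ex_def by auto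
      have "card (snd ` E1) \<le> card (snd ` E - {y})" using card_mono[OF _ f1] finF by auto
      also have "\<dots> = card (snd ` E) - 1" using xy by (simp add: card_Diff_singleton_if finF rev_image_eqI)
      finally have cf0: "card (snd ` E1) \<le> card (snd ` E) - 1" .
      have "y \<in> snd ` E" using xy by force
      then have "card (snd ` E) \<ge> 1" using finF by (metis One_nat_def Suc_leI card_gt_0_iff empty_iff)
      then have cf: "card (snd ` E1) + 1 \<le> card (snd ` E)" using cf0 by linarith
      have "fst ` E1 \<subseteq> fst ` E" unfolding E1_def by auto
      then have cs: "card (fst ` E1) \<le> card (fst ` E)" using card_mono finF by blast
      have r1: "real (card E1) = real (card E) - real (card Ex)" using cE1 cEx by simp
      have "real (card E1) > c * (real (card (fst ` E1)) + real (card (snd ` E1)))"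
      proof -
        have "c * (real (card (fst ` E1)) + real (card (snd ` E1))) \<le> c * (real (card (fst ` E)) + (real (card (snd ` E)) - 1))"
          using cf cs less.prems(3) by (intro mult_left_mono) auto
        also have "\<dots> = c * (real (card (fst ` E)) + real (card (snd ` E))) - c" by (simp add: algebra_simps)
        also have "\<dots> < real (card E) - real (card Ex)" using less.prems(4) True' Exc by linarith
        finally show ?thesis using r1 by simp
      qed
      moreover have "c * (real (card (fst ` E1)) + real (card (snd ` E1))) \<ge> 0" using less.prems(3) by simp
      ultimately have pos: "card E1 > 0" by linarith
      have finE1: "finite E1" unfolding E1_def using fin by auto
      have lt: "card E1 < card E" using cE1 Ex1 cEx pos by linarith
      have ne1: "E1 \<noteq> {}" using pos by auto
      have "\<exists>E'\<subseteq>E1. E' \<noteq> {} \<and> (\<forall>x y. (x, y) \<in> E' \<longrightarrow>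
            real (card {y'. (x, y') \<in> E'}) \<ge> c \<and> real (card {x'. (x', y) \<in> E'}) \<ge> c)"
        by (rule less.hyps[OF lt finE1 ne1 less.prems(3)]) (use \<open>real (card E1) > _\<close> in linarith)
      then show ?thesis unfolding E1_def by blast
    qed
  qed
qed




lemma graph_bound:
  fixes E :: "(int \<times> int) set" and X Y :: "int set" and n k :: nat
  assumes finX: "finite X" and finY: "finite Y" and EXY: "E \<subseteq> X \<times> Y"
    and cX: "card X = n" and cY: "card Y = n" and k1: "1 \<le> k"
    and nos: "\<And>A B. finite A \<Longrightarrow> finite B \<Longrightarrow> A \<subseteq> E \<Longrightarrow> B \<subseteq> E \<Longrightarrow> A \<inter> B = {} \<Longrightarrow> A \<noteq> {}
       \<Longrightarrow> card A = card B \<Longrightarrow> card A \<le> k \<Longrightarrow> (\<Sum>e\<in>A. fst e - snd e) \<noteq> (\<Sum>e\<in>B. fst e - snd e)"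
    and c1: "1 \<le> real (card E) / (2 * real n)"
  shows "real (card E) / (2 * real n) * (real (card E) / (2 * real n) - 1) ^ (k - 1) \<le> real n"
proof -
  define c where "c = real (card E) / (2 * real n)"
  have n0: "n > 0" using c1 by (cases "n = 0") auto
  have finE: "finite E" using finite_subset[OF EXY] finX finY by auto
  have cpos: "c > 0" using c1 c_def by simp
  have cE: "real (card E) = c * (2 * real n)" unfolding c_def using n0 by simp
  have Ene: "E \<noteq> {}" using cE cpos n0 by auto
  have "fst ` E \<subseteq> X" "snd ` E \<subseteq> Y" using EXY by auto
  then have "card (fst ` E) \<le> n" "card (snd ` E) \<le> n" using card_mono[OF finX] card_mono[OF finY] cX cY by auto
  then have "real (card E) \<ge> c * (real (card (fst ` E)) + real (card (snd ` E)))"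
    using cE cpos by (simp add: mult_left_mono)
  then obtain E' where E': "E' \<subseteq> E" "E' \<noteq> {}" and degE': "\<And>x y. (x, y) \<in> E' \<Longrightarrow>
            real (card {y'. (x, y') \<in> E'}) \<ge> c \<and> real (card {x'. (x', y) \<in> E'}) \<ge> c"
    using prune[OF finE Ene cpos] by blast
  have finE': "finite E'" using finite_subset[OF E'(1) finE] .
  obtain x0 y0 where x0: "(x0, y0) \<in> E'" using E'(2) by auto
  define adj where "adj u w \<longleftrightarrow> (\<exists>x y. (x, y) \<in> E' \<and> ((u = Inl x \<and> w = Inr y) \<or> (u = Inr y \<and> w = Inl x)))"
    for u w :: "int + int"
  define ed where "ed u w = (case u of Inl x \<Rightarrow> (x, projr w) | Inr y \<Rightarrow> (projl w, y))" for u w :: "int + int"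
  define val where "val e = fst e - snd e" for e :: "int \<times> int"
  define phi where "phi = case_sum (\<lambda>x::int. x) (\<lambda>y. y)"
  have NL: "{w. adj (Inl x) w} = Inr ` {y. (x, y) \<in> E'}" for x unfolding adj_def by auto
  have NR: "{w. adj (Inr y) w} = Inl ` {x. (x, y) \<in> E'}" for y unfolding adj_def by auto
  have finN: "finite {w. adj u w}" for u
  proof (cases u)
    case (Inl x)
    have "{y. (x, y) \<in> E'} \<subseteq> snd ` E'" by force
    then have "finite {y. (x, y) \<in> E'}" using finite_subset finite_imageI[OF finE'] by blast
    then show ?thesis using Inl NL by simp
  next
    case (Inr y)
    have "{x. (x, y) \<in> E'} \<subseteq> fst ` E'" by force
    then have "finite {x. (x, y) \<in> E'}" using finite_subset finite_imageI[OF finE'] by blast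
    then show ?thesis using Inr NR by simp
  qed
  interpret bg adj isl ed val phi k c "Inl x0"
  proof
    show "adj w u" if "adj u w" for u w using that unfolding adj_def by auto
    show "isl u \<noteq> isl w" if "adj u w" for u w using that unfolding adj_def by auto
    show "u = u' \<and> w = w' \<or> u = w' \<and> w = u'" if "adj u w" "adj u' w'" "ed u w = ed u' w'" for u w u' w'
      using that unfolding adj_def ed_def by auto
    show "(if isl u then val (ed u w) else - val (ed u w)) = phi u - phi w" if "adj u w" for u w
      using that unfolding adj_def ed_def val_def phi_def by auto
    show "finite {w. adj u w}" for u by (rule finN)
    show "c \<le> real (card {w. adj u w})" if auw: "adj u w" for u w
    proof (cases u)
      case (Inl x)
      then obtain y where "(x, y) \<in> E'" using auw unfolding adj_def by auto
      then have "c \<le> real (card {y. (x, y) \<in> E'})" using degE' by blast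
      then show ?thesis using Inl NL by (simp add: card_image)
    next
      case (Inr y)
      then obtain x where "(x, y) \<in> E'" using auw unfolding adj_def by auto
      then have "c \<le> real (card {x. (x, y) \<in> E'})" using degE' by blast
      then show ?thesis using Inr NR by (simp add: card_image)
    qed
    show "\<exists>w. adj (Inl x0) w" using x0 unfolding adj_def by auto
    show "sum val A \<noteq> sum val B" if "finite A" "finite B" "A \<subseteq> {ed u w |u w. adj u w}" "B \<subseteq> {ed u w |u w. adj u w}"
      "A \<inter> B = {}" "A \<noteq> {}" "card A = card B" "card A \<le> k" for A B
    proof -
      have EE: "{ed u w |u w. adj u w} \<subseteq> E"
      proof
        fix e assume "e \<in> {ed u w |u w. adj u w}"
        then obtain u w where e: "e = ed u w" "adj u w" by blast
        then obtain x y where xy: "(x, y) \<in> E'" "(u = Inl x \<and> w = Inr y) \<or> (u = Inr y \<and> w = Inl x)"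
          unfolding adj_def by blast
        then have "e = (x, y)" using e(1) unfolding ed_def by auto
        then show "e \<in> E" using xy(1) E'(1) by blast
      qed
      have "A \<subseteq> E" "B \<subseteq> E" using that(3,4) EE by blast+
      then have "(\<Sum>e\<in>A. fst e - snd e) \<noteq> (\<Sum>e\<in>B. fst e - snd e)"
        by (rule nos[OF that(1,2) _ _ that(5-8)])
      then show ?thesis unfolding val_def .
    qed
  qed
  have VXY: "\<And>u. \<exists>w. adj u w \<Longrightarrow> (\<exists>x\<in>X. u = Inl x) \<or> (\<exists>y\<in>Y. u = Inr y)"
  proof -
    fix u assume "\<exists>w. adj u w"
    then obtain w x y where xy: "(x, y) \<in> E'" "(u = Inl x \<and> w = Inr y) \<or> (u = Inr y \<and> w = Inl x)"
      unfolding adj_def by blast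
    have "x \<in> X" "y \<in> Y" using xy(1) E'(1) EXY by auto
    then show "(\<exists>x\<in>X. u = Inl x) \<or> (\<exists>y\<in>Y. u = Inr y)" using xy(2) by blast
  qed
  have finV: "finite {u. (\<exists>w. adj u w) \<and> isl u = b}" for b
  proof -
    have "{u. (\<exists>w. adj u w) \<and> isl u = b} \<subseteq> Inl ` X \<union> Inr ` Y" using VXY by blast
    moreover have "finite (Inl ` X \<union> Inr ` Y)" using finX finY by simp
    ultimately show ?thesis by (rule finite_subset)
  qed
  obtain b where b: "c * (c - 1) ^ (k - 1) \<le> real (card {u. (\<exists>w. adj u w) \<and> isl u = b})"
    using final[OF c1[folded c_def] k1 finV] by blast
  have "card {u. (\<exists>w. adj u w) \<and> isl u = b} \<le> n"
  proof (cases b)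
    case True
    have sub: "{u. (\<exists>w. adj u w) \<and> isl u = b} \<subseteq> Inl ` X" 
    proof
      fix u assume "u \<in> {u. (\<exists>w. adj u w) \<and> isl u = b}"
      then have "\<exists>w. adj u w" "isl u" using True by auto
      then show "u \<in> Inl ` X" using VXY[of u] by auto
    qed
    have "card {u. (\<exists>w. adj u w) \<and> isl u = b} \<le> card (Inl ` X :: (int + int) set)" using sub finX by (simp add: card_mono)
    then show ?thesis using cX by (simp add: card_image)
  next
    case False
    have sub: "{u. (\<exists>w. adj u w) \<and> isl u = b} \<subseteq> Inr ` Y" 
    proof
      fix u assume "u \<in> {u. (\<exists>w. adj u w) \<and> isl u = b}"
      then have "\<exists>w. adj u w" "\<not> isl u" using False by auto
      then show "u \<in> Inr ` Y" using VXY[of u] by auto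
    qed
    have "card {u. (\<exists>w. adj u w) \<and> isl u = b} \<le> card (Inr ` Y :: (int + int) set)" using sub finY by (simp add: card_mono)
    then show ?thesis using cY by (simp add: card_image)
  qed
  then show ?thesis using b unfolding c_def by linarith
qed




lemma arith_final:
  fixes m :: real and n k :: nat
  assumes k2: "2 \<le> k" and n1: "1 \<le> n" and m0: "0 \<le> m"
    and H: "1 \<le> m / (2 * real n) \<Longrightarrow> m / (2 * real n) * (m / (2 * real n) - 1) ^ (k - 1) \<le> real n"
  shows "m / (2 * real k) < real n powr ((real k + 1) / real k)"
proof -
  have npow: "real n powr ((real k + 1) / real k) = real n * real n powr (1 / real k)"
    using n1 k2 by (simp add: add_divide_distrib powr_add)
  have np1: "real n powr (1 / real k) \<ge> 1" using n1 k2 by (simp add: ge_one_powr_ge_zero)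
  define c where "c = m / (2 * real n)"
  have mc: "m = 2 * real n * c" unfolding c_def using n1 by simp
  show ?thesis
  proof (cases "c \<le> 1")
    case True
    have "m \<le> 2 * real n" using mc True n1 by (simp add: mult_left_le)
    then have "m / (2 * real k) \<le> real n / real k" using k2 by (simp add: divide_simps)
    also have "\<dots> < real n" using k2 n1 by (simp add: divide_simps)
    also have "\<dots> \<le> real n * real n powr (1 / real k)" using np1 n1 by simp
    finally show ?thesis using npow by simp
  next
    case False
    have h: "c * (c - 1) ^ (k - 1) \<le> real n" using H False unfolding c_def by simp
    have "(c - 1) ^ k = (c - 1) * (c - 1) ^ (k - 1)" using k2 by (metis Suc_diff_1 le_trans one_le_numeral not_one_le_zero power_Suc zero_less_iff_neq_zero le_numeral_extra(1) neq0_conv)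
    also have "\<dots> < c * (c - 1) ^ (k - 1)" using False by (intro mult_strict_right_mono) auto
    finally have lt: "(c - 1) ^ k < real n" using h by simp
    have "c - 1 = ((c - 1) ^ k) powr (1 / real k)" using False k2
      by (simp add: powr_realpow[symmetric] powr_powr)
    also have "\<dots> < real n powr (1 / real k)" using lt False k2
      by (intro powr_less_mono2) auto
    finally have c1: "c < 1 + real n powr (1 / real k)" by simp
    have "m < 2 * real n * (1 + real n powr (1 / real k))" using mc c1 n1 by simp
    also have "\<dots> \<le> 2 * real n * (2 * real n powr (1 / real k))" using np1 n1 by simp
    also have "\<dots> \<le> 2 * real k * (real n * real n powr (1 / real k))" using k2 n1 np1
      by (simp add: mult_right_mono)
    finally show ?thesis using npow k2 by (simp add: divide_simps mult.commute)
  qed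
qed


lemma diff_full: "p > 0 \<Longrightarrow> zp p \<subseteq> diffset_mod p (zp p) (zp p)"
proof
  fix s assume p: "p > 0" and s: "s \<in> zp p"
  have "0 \<in> zp p" using p by (simp add: zp_def)
  moreover have "s = (s - 0) mod p" using s by (simp add: zp_def)
  ultimately show "s \<in> diffset_mod p (zp p) (zp p)" unfolding diffset_mod_def using s by blast
qed

lemma main_bound:
  fixes p :: int and k :: nat and S X Y :: "int set" and N :: nat
  assumes p0: "p > 0" and k1: "0 < k" and S: "S \<subseteq> zp p"
    and dk: "distinct_k_sums p k S"
    and X: "X \<subseteq> zp p" and Y: "Y \<subseteq> zp p" and cX: "card X = N" and cY: "card Y = N"
    and N1: "1 \<le> N"
  shows "real (card (S \<inter> diffset_mod p X Y)) / (2 * real k) < real N powr ((real k + 1) / real k)"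
proof -
  define S' where "S' = S \<inter> diffset_mod p X Y"
  define m where "m = card S'"
  have finZ: "finite (zp p)" by (simp add: zp_def)
  have finS: "finite S" using finite_subset[OF S finZ] .
  have finX: "finite X" using finite_subset[OF X finZ] .
  have finY: "finite Y" using finite_subset[OF Y finZ] .
  have finS': "finite S'" unfolding S'_def using finS by simp
  have npow1: "real N powr ((real k + 1) / real k) \<ge> 1" using N1 k1 by (simp add: ge_one_powr_ge_zero)
  show ?thesis
  proof (cases "m < 2 * k")
    case True
    then have "real m / (2 * real k) < 1" using k1 by (simp add: divide_simps)
    then show ?thesis using npow1 unfolding m_def S'_def by linarith
  next
    case False
    then have m2k: "2 * k \<le> m" by simp
    have rep: "\<exists>xy. fst xy \<in> X \<and> snd xy \<in> Y \<and> s = (fst xy - snd xy) mod p" if "s \<in> S'" for s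
    proof -
      have "s \<in> diffset_mod p X Y" using that unfolding S'_def by simp
      then obtain x y where "s = (x - y) mod p" "x \<in> X" "y \<in> Y" unfolding diffset_mod_def by blast
      then show ?thesis by (intro exI[of _ "(x, y)"]) simp
    qed
    define r where "r s = (SOME xy. fst xy \<in> X \<and> snd xy \<in> Y \<and> s = (fst xy - snd xy) mod p)" for s
    have r: "fst (r s) \<in> X \<and> snd (r s) \<in> Y \<and> s = (fst (r s) - snd (r s)) mod p" if "s \<in> S'" for s
      unfolding r_def by (rule someI_ex) (rule rep[OF that])
    define g where "g e = (fst e - snd e) mod p" for e :: "int \<times> int"
    define E where "E = r ` S'"
    have gr: "g (r s) = s" if "s \<in> S'" for s using r[OF that] unfolding g_def by simp
    have injr: "inj_on r S'"
    proof (rule inj_onI)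
      fix a b assume ab: "a \<in> S'" "b \<in> S'" "r a = r b"
      have "a = g (r a)" using gr[OF ab(1)] by simp
      also have "\<dots> = g (r b)" using ab(3) by simp
      also have "\<dots> = b" using gr[OF ab(2)] .
      finally show "a = b" .
    qed
    have cE: "card E = m" unfolding E_def m_def using card_image[OF injr] .
    have EXY: "E \<subseteq> X \<times> Y" unfolding E_def using r by (simp add: image_subset_iff mem_Times_iff)
    have injg: "inj_on g E"
    proof (rule inj_onI)
      fix e1 e2 assume e: "e1 \<in> E" "e2 \<in> E" "g e1 = g e2"
      obtain s1 where s1: "s1 \<in> S'" "e1 = r s1" using e(1) unfolding E_def by blast
      obtain s2 where s2: "s2 \<in> S'" "e2 = r s2" using e(2) unfolding E_def by blast
      have "s1 = g e1" using gr[OF s1(1)] s1(2) by simp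
      also have "\<dots> = g e2" by (rule e(3))
      also have "\<dots> = s2" using gr[OF s2(1)] s2(2) by simp
      finally show "e1 = e2" using s1(2) s2(2) by simp
    qed
    have gE: "g ` E = S'"
    proof -
      have "(\<lambda>s. g (r s)) ` S' = (\<lambda>s. s) ` S'" by (rule image_cong) (simp_all add: gr)
      then show ?thesis unfolding E_def image_image by simp
    qed
    have finE: "finite E" unfolding E_def using finS' by simp
    have S'S: "S' \<subseteq> S" unfolding S'_def by auto
    have nos: "(\<Sum>e\<in>A. fst e - snd e) \<noteq> (\<Sum>e\<in>B. fst e - snd e)"
      if A: "finite A" and B: "finite B" and AE: "A \<subseteq> E" and BE: "B \<subseteq> E" and AB: "A \<inter> B = {}"
        and Ane: "A \<noteq> {}" and cAB: "card A = card B" and Ak: "card A \<le> k" for A B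
    proof
      assume eq: "(\<Sum>e\<in>A. fst e - snd e) = (\<Sum>e\<in>B. fst e - snd e)"
      define TA where "TA = g ` A"
      define TB where "TB = g ` B"
      have injA: "inj_on g A" using inj_on_subset[OF injg AE] .
      have injB: "inj_on g B" using inj_on_subset[OF injg BE] .
      have cTA: "card TA = card A" unfolding TA_def using card_image[OF injA] .
      have cTB: "card TB = card B" unfolding TB_def using card_image[OF injB] .
      have TAS: "TA \<subseteq> S'" unfolding TA_def using AE gE by blast
      have TBS: "TB \<subseteq> S'" unfolding TB_def using BE gE by blast
      have dT: "TA \<inter> TB = {}"
      proof -
        have "g ` A \<inter> g ` B = g ` (A \<inter> B)" using inj_on_image_Int[OF injg AE BE] by simp
        then show ?thesis unfolding TA_def TB_def using AB by simp
      qed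
      have sTA: "(\<Sum>TA) mod p = (\<Sum>e\<in>A. fst e - snd e) mod p"
      proof -
        have "(\<Sum>TA) = (\<Sum>e\<in>A. g e)" unfolding TA_def using sum.reindex[OF injA] by simp
        also have "\<dots> mod p = (\<Sum>e\<in>A. fst e - snd e) mod p" unfolding g_def by (simp add: mod_sum_eq)
        finally show ?thesis .
      qed
      have sTB: "(\<Sum>TB) mod p = (\<Sum>e\<in>B. fst e - snd e) mod p"
      proof -
        have "(\<Sum>TB) = (\<Sum>e\<in>B. g e)" unfolding TB_def using sum.reindex[OF injB] by simp
        also have "\<dots> mod p = (\<Sum>e\<in>B. fst e - snd e) mod p" unfolding g_def by (simp add: mod_sum_eq)
        finally show ?thesis .
      qed
      define j where "j = card A"
      have finTA: "finite TA" "finite TB" using finite_subset[OF TAS finS'] finite_subset[OF TBS finS'] by auto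
      have "card (TA \<union> TB) = 2 * j" using card_Un_disjoint[OF finTA dT] cTA cTB cAB j_def by simp
      moreover have "TA \<union> TB \<subseteq> S'" using TAS TBS by auto
      ultimately have "card (S' - (TA \<union> TB)) = m - 2 * j" unfolding m_def
        using card_Diff_subset[of "TA \<union> TB" S'] finTA by simp
      then have "card (S' - (TA \<union> TB)) \<ge> k - j" using m2k Ak j_def by linarith
      then obtain P where P: "P \<subseteq> S' - (TA \<union> TB)" "card P = k - j"
        by (rule obtain_subset_with_card_n)
      have finP: "finite P" using finite_subset[OF P(1)] finS' by auto
      define T where "T = TA \<union> P"
      define T' where "T' = TB \<union> P"
      have dTAP: "TA \<inter> P = {}" "TB \<inter> P = {}" using P(1) by auto
      have cT: "card T = k" unfolding T_def using card_Un_disjoint[OF finTA(1) finP dTAP(1)] P(2) cTA j_def Ak by simp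
      have cT': "card T' = k" unfolding T'_def using card_Un_disjoint[OF finTA(2) finP dTAP(2)] P(2) cTB cAB j_def Ak by simp
      have sT: "\<Sum>T = \<Sum>TA + \<Sum>P" unfolding T_def using sum.union_disjoint[OF finTA(1) finP dTAP(1)] .
      have sT': "\<Sum>T' = \<Sum>TB + \<Sum>P" unfolding T'_def using sum.union_disjoint[OF finTA(2) finP dTAP(2)] .
      have "(\<Sum>T) mod p = (\<Sum>T') mod p"
      proof -
        have "(\<Sum>TA + \<Sum>P) mod p = ((\<Sum>TA) mod p + \<Sum>P) mod p" by (simp add: mod_add_left_eq)
        also have "\<dots> = ((\<Sum>TB) mod p + \<Sum>P) mod p" using sTA sTB eq by simp
        also have "\<dots> = (\<Sum>TB + \<Sum>P) mod p" by (simp add: mod_add_left_eq)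
        finally show ?thesis unfolding sT sT' .
      qed
      moreover have "T \<subseteq> S" "T' \<subseteq> S" unfolding T_def T'_def using TAS TBS P(1) S'S by auto
      ultimately have "T \<subseteq> S \<and> T' \<subseteq> S \<and> card T = k \<and> card T' = k \<and> (\<Sum>T) mod p = (\<Sum>T') mod p"
        using cT cT' by simp
      then have "T = T'" using dk unfolding distinct_k_sums_def by blast
      moreover have "TA \<noteq> {}" unfolding TA_def using Ane by simp
      then obtain a where a: "a \<in> TA" by blast
      then have "a \<in> T'" using \<open>T = T'\<close> unfolding T_def by blast
      then show False using a dT dTAP unfolding T'_def by blast
    qed
    have mle: "m \<le> N * N"
    proof -
      have "card E \<le> card (X \<times> Y)" using card_mono[OF _ EXY] finX finY by simp
      then show ?thesis using cE cX cY by (simp add: card_cartesian_product)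
    qed
    show ?thesis
    proof (cases "k = 1")
      case True
      have mN: "real m \<le> real N * real N" using mle by (simp add: of_nat_mult[symmetric] del: of_nat_mult)
      have Npos: "real N * real N > 0" using N1 by simp
      have ex: "(real k + 1) / real k = 2" using True by simp
      have "real N powr ((real k + 1) / real k) = real N ^ 2" unfolding ex using N1 by (simp add: powr_numeral)
      also have "\<dots> = real N * real N" by (simp add: power2_eq_square)
      finally have pw: "real N powr ((real k + 1) / real k) = real N * real N" .
      have "real m / (2 * real k) = real m / 2" using True by simp
      also have "\<dots> < real N * real N" using mN Npos by linarith
      finally show ?thesis unfolding pw m_def S'_def .
    next
      case False
      then have k2: "2 \<le> k" using k1 by simp
      have H: "real m / (2 * real N) * (real m / (2 * real N) - 1) ^ (k - 1) \<le> real N"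
        if h1: "1 \<le> real m / (2 * real N)"
      proof -
        have h1': "1 \<le> real (card E) / (2 * real N)" using h1 cE by simp
        have k1': "1 \<le> k" using k1 by simp
        show ?thesis using graph_bound[OF finX finY EXY cX cY k1' nos h1'] unfolding cE .
      qed
      have m0: "0 \<le> real m" by simp
      have "real m / (2 * real k) < real N powr ((real k + 1) / real k)"
        using arith_final[OF k2 N1 m0 H] .
      then show ?thesis unfolding m_def S'_def .
    qed
  qed
qed


theorem theorem7:
  fixes p :: int and \<alpha> :: real and k :: nat and S :: "int set"
  assumes "prime p" and "0 < \<alpha>" and "\<alpha> \<le> 1" and "0 < k"
    and "S \<subseteq> zp p" and "S \<noteq> {}"
    and "distinct_k_sums p k S"
  shows "real (bsgs1_complexity p \<alpha> S) >
           (\<alpha> * real (card S) / (2 * real k)) powr (real k / (real k + 1))"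
proof -
  note pr = assms(1) and a0 = assms(2) and a1 = assms(3) and k0 = assms(4) and S = assms(5)
    and Sne = assms(6) and dk = assms(7)
  have p0: "p > 0" using pr by (simp add: prime_gt_0_int)
  have finZ: "finite (zp p)" by (simp add: zp_def)
  have finS: "finite S" using finite_subset[OF S finZ] .
  have cS: "card S > 0" using finS Sne by (simp add: card_gt_0_iff)
  define Q where "Q n \<longleftrightarrow> (\<exists>X Y. X \<subseteq> zp p \<and> Y \<subseteq> zp p \<and> card X = n \<and> card Y = n \<and>
        real (card (S \<inter> diffset_mod p X Y)) \<ge> \<alpha> * real (card S))" for n
  have Qex: "Q (card (zp p))"
  proof -
    have "S \<inter> diffset_mod p (zp p) (zp p) = S" using diff_full[OF p0] S by auto
    moreover have "\<alpha> * real (card S) \<le> 1 * real (card S)" by (rule mult_right_mono) (use a1 in auto)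
    ultimately have "real (card (S \<inter> diffset_mod p (zp p) (zp p))) \<ge> \<alpha> * real (card S)"
      by simp
    then show ?thesis unfolding Q_def by blast
  qed
  define N where "N = bsgs1_complexity p \<alpha> S"
  have NL: "N = (LEAST n. Q n)" unfolding N_def bsgs1_complexity_def Q_def by simp
  have "Q N" unfolding NL by (rule LeastI[of Q, OF Qex])
  then obtain X Y where X: "X \<subseteq> zp p" and Y: "Y \<subseteq> zp p" and cX: "card X = N" and cY: "card Y = N"
    and cov: "real (card (S \<inter> diffset_mod p X Y)) \<ge> \<alpha> * real (card S)" unfolding Q_def by blast
  have pos: "\<alpha> * real (card S) > 0" using a0 cS by simp
  have N1: "1 \<le> N"
  proof (rule ccontr)
    assume "\<not> 1 \<le> N"
    then have "N = 0" by simp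
    moreover have "finite X" using finite_subset[OF X finZ] .
    ultimately have "X = {}" using cX by simp
    then have "diffset_mod p X Y = {}" unfolding diffset_mod_def by simp
    then show False using cov pos by simp
  qed
  have mb: "real (card (S \<inter> diffset_mod p X Y)) / (2 * real k) < real N powr ((real k + 1) / real k)"
    using main_bound[OF p0 k0 S dk X Y cX cY N1] .
  define a where "a = \<alpha> * real (card S) / (2 * real k)"
  have apos: "a > 0" unfolding a_def using pos k0 by simp
  have "a \<le> real (card (S \<inter> diffset_mod p X Y)) / (2 * real k)"
    unfolding a_def using cov k0 by (simp add: divide_right_mono)
  then have alt: "a < real N powr ((real k + 1) / real k)" using mb by linarith
  have ek: "real k / (real k + 1) > 0" using k0 by simp
  have "a powr (real k / (real k + 1)) < (real N powr ((real k + 1) / real k)) powr (real k / (real k + 1))"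
    by (rule powr_less_mono2[OF ek]) (use apos alt in auto)
  also have "\<dots> = real N powr (((real k + 1) / real k) * (real k / (real k + 1)))" by (simp add: powr_powr)
  also have "((real k + 1) / real k) * (real k / (real k + 1)) = 1"
  proof -
    have "real k > 0" "real k + 1 > 0" using k0 by auto
    then show ?thesis by (simp add: divide_simps)
  qed
  also have "real N powr 1 = real N" using N1 by simp
  finally show ?thesis unfolding a_def N_def .
qed

end
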